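(* Fix a constant $c\ge 10$. Consider the random pairwise load balancing process on $n\ge2$ nodes with arbitrary initial load vector $\ell(0)\in\mathbb{N}_0^n$. Let $T_2$ be the first time step $t\ge T_1$ such that $\max_{1\le i\le n}\ell_i(t)\le \varnothing+2c$ and $\min_{1\le i\le n}\ell_i(t)\ge \varnothing-2c$. Then with high probability (probability $1-O(1/n)$), $T_2 = T_1+O(n\log n)$, where the constant in $O(\cdot)$ depends only on $c$.
   Context: Random pairwise load balancing process: $n$ nodes, $m$ tokens, load vector $\ell(t)\in\mathbb{Z}^n$. In each time step $t$, independently, an ordered pair $(u,v)$ of distinct nodes is chosen uniformly at random and loads become $\ell_u(t+1)=\lceil(\ell_u(t)+\ell_v(t))/2\rceil$, $\ell_v(t+1)=\lfloor(\ell_u(t)+\ell_v(t))/2\rfloor$. Average load $\varnothing=m/n$; potential $\Phi(\ell)=\sum_i(\ell_i-\varnothing)^2$; $T_1$ is the first time $t$ with $\Phi(\ell(t))<n$. *)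

theory Defs
  imports "HOL-Probability.Probability"
begin

text \<open>Nodes are 0,...,n-1. A load vector is a function nat => nat (only the values
at indices below n matter). Ordered pairs of distinct nodes:\<close>

definition node_pairs :: "nat \<Rightarrow> (nat \<times> nat) set" where
  "node_pairs n = {(u, v). u < n \<and> v < n \<and> u \<noteq> v}"

definition pair_stream_space :: "nat \<Rightarrow> (nat \<times> nat) stream measure" where
  "pair_stream_space n = stream_space (measure_pmf (pmf_of_set (node_pairs n)))"

definition balance_step :: "nat \<times> nat \<Rightarrow> (nat \<Rightarrow> nat) \<Rightarrow> (nat \<Rightarrow> nat)" where
  "balance_step p l = (let (u, v) = p; s = l u + l v in
      (l(u := nat \<lceil>real s / 2\<rceil>))(v := nat \<lfloor>real s / 2\<rfloor>))"

primrec load :: "(nat \<Rightarrow> nat) \<Rightarrow> (nat \<times> nat) stream \<Rightarrow> nat \<Rightarrow> (nat \<Rightarrow> nat)" where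
  "load l0 \<omega> 0 = l0"
| "load l0 \<omega> (Suc t) = balance_step (\<omega> !! t) (load l0 \<omega> t)"

definition avg_load :: "nat \<Rightarrow> (nat \<Rightarrow> nat) \<Rightarrow> real" where
  "avg_load n l0 = real (\<Sum>i<n. l0 i) / real n"

definition potential :: "nat \<Rightarrow> real \<Rightarrow> (nat \<Rightarrow> nat) \<Rightarrow> real" where
  "potential n a l = (\<Sum>i<n. (real (l i) - a)\<^sup>2)"

text \<open>T1: first t with potential < n (meaningful only when such t exists).\<close>
definition T1 :: "nat \<Rightarrow> (nat \<Rightarrow> nat) \<Rightarrow> (nat \<times> nat) stream \<Rightarrow> nat" where
  "T1 n l0 \<omega> = (LEAST t. potential n (avg_load n l0) (load l0 \<omega> t) < real n)"

definition balanced_within :: "nat \<Rightarrow> real \<Rightarrow> real \<Rightarrow> (nat \<Rightarrow> nat) \<Rightarrow> bool" where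
  "balanced_within n a d l \<longleftrightarrow> (\<forall>i<n. real (l i) \<le> a + d \<and> real (l i) \<ge> a - d)"

definition T2 :: "real \<Rightarrow> nat \<Rightarrow> (nat \<Rightarrow> nat) \<Rightarrow> (nat \<times> nat) stream \<Rightarrow> nat" where
  "T2 c n l0 \<omega> = (LEAST t. T1 n l0 \<omega> \<le> t \<and>
       balanced_within n (avg_load n l0) (2 * c) (load l0 \<omega> t))"

end

theory Submission
  imports Defs
begin


abbreviation "PM n \<equiv> measure_pmf (pmf_of_set (node_pairs n))"

lemma node_pairs_finite: "finite (node_pairs n)"
  unfolding node_pairs_def
  by (rule finite_subset[of _ "{..<n} \<times> {..<n}"]) auto

lemma node_pairs_ne: "n \<ge> 2 \<Longrightarrow> node_pairs n \<noteq> {}"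
proof -
  assume "n \<ge> 2" then have "(0,1) \<in> node_pairs n" unfolding node_pairs_def by auto
  then show ?thesis by auto
qed

lemma card_node_pairs: "card (node_pairs n) = n * (n - 1)"
proof -
  have "node_pairs n = ({..<n} \<times> {..<n}) - (\<lambda>i. (i,i)) ` {..<n}"
    unfolding node_pairs_def by auto
  moreover have "card (({..<n} \<times> {..<n}) - (\<lambda>i. (i,i)) ` {..<n}) = n*n - n"
    by (subst card_Diff_subset) (auto simp: card_image inj_on_def card_cartesian_product)
  ultimately show ?thesis by (simp add: diff_mult_distrib2)
qed

lemma prob_space_S: "n \<ge> 2 \<Longrightarrow> prob_space (pair_stream_space n)"
  unfolding pair_stream_space_def
  by (rule prob_space.prob_space_stream_space) (rule prob_space_measure_pmf)

lemma space_S[simp]: "space (pair_stream_space n) = UNIV"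
  unfolding pair_stream_space_def by (simp add: space_stream_space streams_UNIV)

lemma load_Cons: "load l (p ## \<omega>) (Suc t) = load (balance_step p l) \<omega> t"
  by (induction t) auto

lemma measurable_load[measurable]:
  "(\<lambda>\<omega>. load l \<omega> k) \<in> measurable (pair_stream_space n) (count_space UNIV)"
proof (induction k)
  case 0 then show ?case by simp
next
  case (Suc k)
  have sn: "(\<lambda>\<omega>. \<omega> !! k) \<in> measurable (pair_stream_space n) (count_space UNIV)"
    unfolding pair_stream_space_def
    using measurable_snth[of k "PM n"] by (simp add: measurable_cong_sets)
  show ?case
    apply simp
    apply (rule measurable_compose_countable'[where f="\<lambda>p \<omega>. balance_step p (load l \<omega> k)" and I=UNIV, OF _ sn])
     apply (rule measurable_compose[OF Suc]) apply simp
    by simp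
qed

lemma measurable_load_borel[measurable]:
  "(\<lambda>\<omega>. g (load l \<omega> k)) \<in> borel_measurable (pair_stream_space n)"
  by (rule measurable_compose[OF measurable_load]) simp

lemma measurable_load_pred[measurable]:
  "Measurable.pred (pair_stream_space n) (\<lambda>\<omega>. Q (load l \<omega> k))"
  by (rule measurable_compose[OF measurable_load]) simp

lemma decomp:
  assumes "n \<ge> 2" and [measurable]: "f \<in> borel_measurable (pair_stream_space n)"
  shows "(\<integral>\<^sup>+\<omega>. f \<omega> \<partial>pair_stream_space n)
     = (\<Sum>p\<in>node_pairs n. \<integral>\<^sup>+\<omega>. f (p ## \<omega>) \<partial>pair_stream_space n) / card (node_pairs n)"
proof -
  have f: "f \<in> borel_measurable (stream_space (PM n))" using assms(2) by (simp add: pair_stream_space_def)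
  show ?thesis
    unfolding pair_stream_space_def
    apply (subst prob_space.nn_integral_stream_space[OF prob_space_measure_pmf f])
    apply (subst nn_integral_pmf_of_set[OF node_pairs_ne[OF assms(1)] node_pairs_finite])
    ..
qed

lemma ennreal_avg:
  assumes "finite A" "A \<noteq> {}" "\<And>p. p \<in> A \<Longrightarrow> g p \<ge> 0"
  shows "(\<Sum>p\<in>A. ennreal (g p)) / of_nat (card A) = ennreal ((\<Sum>p\<in>A. g p) / card A)"
proof -
  have c: "card A > 0" using assms by (simp add: card_gt_0_iff)
  have "(\<Sum>p\<in>A. ennreal (g p)) = ennreal (\<Sum>p\<in>A. g p)"
    using assms by (simp add: sum_ennreal)
  moreover have "(of_nat (card A) :: ennreal) = ennreal (real (card A))"
    by (simp add: ennreal_of_nat_eq_real_of_nat)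
  ultimately show ?thesis using c assms
    by (simp add: divide_ennreal sum_nonneg)
qed

lemma contraction:
  assumes n: "n \<ge> 2"
  and closed: "\<And>l p. l \<in> I \<Longrightarrow> p \<in> node_pairs n \<Longrightarrow> balance_step p l \<in> I"
  and step: "\<And>l. l \<in> I \<Longrightarrow> (\<Sum>p\<in>node_pairs n. F (balance_step p l)) \<le> real (card (node_pairs n)) * \<rho> * F l"
  and nn: "\<And>l. F l \<ge> 0" and rho: "\<rho> \<ge> 0"
  shows "l \<in> I \<Longrightarrow> (\<integral>\<^sup>+\<omega>. ennreal (F (load l \<omega> k)) \<partial>pair_stream_space n) \<le> ennreal (\<rho>^k * F l)"
proof (induction k arbitrary: l)
  case 0
  interpret prob_space "pair_stream_space n" using prob_space_S[OF n] .
  show ?case using emeasure_space_1 by simp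
next
  case (Suc k)
  define N where "N = card (node_pairs n)"
  have N: "N > 0" unfolding N_def using node_pairs_ne[OF n] node_pairs_finite by (simp add: card_gt_0_iff)
  have "(\<integral>\<^sup>+\<omega>. ennreal (F (load l \<omega> (Suc k))) \<partial>pair_stream_space n)
      = (\<Sum>p\<in>node_pairs n. \<integral>\<^sup>+\<omega>. ennreal (F (load (balance_step p l) \<omega> k)) \<partial>pair_stream_space n) / of_nat N"
    unfolding N_def by (subst decomp[OF n]) (simp_all only: load_Cons, measurable)
  also have "\<dots> \<le> (\<Sum>p\<in>node_pairs n. ennreal (\<rho>^k * F (balance_step p l))) / of_nat N"
    by (intro divide_right_mono_ennreal sum_mono Suc.IH closed Suc.prems)
  also have "\<dots> = ennreal ((\<Sum>p\<in>node_pairs n. \<rho>^k * F (balance_step p l)) / N)"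
    unfolding N_def using node_pairs_ne[OF n] node_pairs_finite nn rho
    by (intro ennreal_avg) auto
  also have "\<dots> \<le> ennreal (\<rho>^Suc k * F l)"
  proof (rule ennreal_leI)
    have "(\<Sum>p\<in>node_pairs n. \<rho>^k * F (balance_step p l)) = \<rho>^k * (\<Sum>p\<in>node_pairs n. F (balance_step p l))"
      by (simp add: sum_distrib_left)
    also have "\<dots> \<le> \<rho>^k * (real N * \<rho> * F l)"
      using step[OF Suc.prems] rho unfolding N_def by (intro mult_left_mono) auto
    finally show "(\<Sum>p\<in>node_pairs n. \<rho>^k * F (balance_step p l)) / N \<le> \<rho>^Suc k * F l"
      using N by (simp add: divide_le_eq algebra_simps)
  qed
  finally show ?case .
qed

lemma load_Cons2: "load l (p ## \<omega>) (Suc s + k) = load (balance_step p l) \<omega> (s + k)"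
  using load_Cons[of l p \<omega> "s+k"] by simp

lemma all_less_Suc_split: "(\<forall>r<Suc s. P r) \<longleftrightarrow> P 0 \<and> (\<forall>r<s. P (Suc r))"
  using less_Suc_eq_0_disj by auto

lemma shift_if: "\<not> Q l \<Longrightarrow> (if Q (load l (p##\<omega>) (Suc s)) \<and> (\<forall>r<Suc s. \<not>Q (load l (p##\<omega>) r)) then g (load l (p##\<omega>) (Suc s + k)) else 0) = (if Q (load (balance_step p l) \<omega> s) \<and> (\<forall>r<s. \<not> Q(load (balance_step p l) \<omega> r)) then g (load (balance_step p l) \<omega> (s+k)) else (0::ennreal))"
  apply (subst load_Cons2)
  apply (simp add: all_less_Suc_split load_Cons del: load.simps(2))
  done

lemma markov_s:
  fixes g :: "(nat \<Rightarrow> nat) \<Rightarrow> ennreal"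
  assumes n: "n \<ge> 2"
  and hyp: "\<And>l'. Q l' \<Longrightarrow> (\<integral>\<^sup>+\<omega>. g (load l' \<omega> k) \<partial>pair_stream_space n) \<le> \<epsilon>"
  shows "(\<integral>\<^sup>+\<omega>. (if Q (load l \<omega> s) \<and> (\<forall>r<s. \<not> Q (load l \<omega> r)) then g (load l \<omega> (s + k)) else 0) \<partial>pair_stream_space n)
        \<le> \<epsilon> * (\<integral>\<^sup>+\<omega>. (if Q (load l \<omega> s) \<and> (\<forall>r<s. \<not> Q (load l \<omega> r)) then 1 else 0) \<partial>pair_stream_space n)"
proof (induction s arbitrary: l)
  case 0
  interpret prob_space "pair_stream_space n" using prob_space_S[OF n] .
  show ?case
  proof (cases "Q l")
    case True
    then show ?thesis using hyp[OF True] emeasure_space_1 by simp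
  next
    case False
    then show ?thesis by simp
  qed
next
  case (Suc s)
  show ?case
  proof (cases "Q l")
    case True
    then show ?thesis by (simp add: all_less_Suc_split)
  next
    case False
    define N where "N = card (node_pairs n)"
    let ?I = "\<lambda>l' \<omega>. (if Q (load l' \<omega> s) \<and> (\<forall>r<s. \<not> Q (load l' \<omega> r)) then g (load l' \<omega> (s + k)) else 0)"
    let ?J = "\<lambda>l' \<omega>. (if Q (load l' \<omega> s) \<and> (\<forall>r<s. \<not> Q (load l' \<omega> r)) then 1 else 0::ennreal)"
    have eq1: "(\<integral>\<^sup>+\<omega>. (if Q (load l \<omega> (Suc s)) \<and> (\<forall>r<Suc s. \<not> Q (load l \<omega> r)) then g (load l \<omega> (Suc s + k)) else 0) \<partial>pair_stream_space n)
      = (\<Sum>p\<in>node_pairs n. \<integral>\<^sup>+\<omega>. ?I (balance_step p l) \<omega> \<partial>pair_stream_space n) / of_nat N"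
      unfolding N_def
      apply (subst decomp[OF n])
       apply measurable
      apply (intro arg_cong2[where f="(/)"] sum.cong refl nn_integral_cong)
      using False by (rule shift_if)
    have eq2: "(\<integral>\<^sup>+\<omega>. (if Q (load l \<omega> (Suc s)) \<and> (\<forall>r<Suc s. \<not> Q (load l \<omega> r)) then 1 else 0) \<partial>pair_stream_space n)
      = (\<Sum>p\<in>node_pairs n. \<integral>\<^sup>+\<omega>. ?J (balance_step p l) \<omega> \<partial>pair_stream_space n) / of_nat N"
      unfolding N_def
      apply (subst decomp[OF n])
       apply measurable
      using False by (simp add: all_less_Suc_split load_Cons del: load.simps(2))
    have "(\<Sum>p\<in>node_pairs n. \<integral>\<^sup>+\<omega>. ?I (balance_step p l) \<omega> \<partial>pair_stream_space n) / of_nat N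
       \<le> (\<Sum>p\<in>node_pairs n. \<epsilon> * \<integral>\<^sup>+\<omega>. ?J (balance_step p l) \<omega> \<partial>pair_stream_space n) / of_nat N"
      by (intro divide_right_mono_ennreal sum_mono Suc.IH)
    also have "\<dots> = \<epsilon> * ((\<Sum>p\<in>node_pairs n. \<integral>\<^sup>+\<omega>. ?J (balance_step p l) \<omega> \<partial>pair_stream_space n) / of_nat N)"
      by (simp add: sum_distrib_left ennreal_times_divide)
    finally show ?thesis using eq1 eq2 by simp
  qed
qed



lemma nat_ceil_half: "nat \<lceil>real s / 2\<rceil> = (s + 1) div 2"
proof -
  obtain m where "s = 2*m \<or> s = 2*m+1" by (metis oddE evenE)
  then show ?thesis
  proof
    assume s: "s = 2*m"
    have "real s / 2 = real m" using s by simp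
    moreover have "(s+1) div 2 = m" using s by simp
    ultimately show ?thesis by simp
  next
    assume s: "s = 2*m+1"
    have h: "real s / 2 = real m + 1/2" using s by simp
    have "(s+1) div 2 = m + 1" using s by simp
    have "\<lceil>real s / 2\<rceil> = int (m + 1)" unfolding h by (rule ceiling_unique) auto
    then show ?thesis using \<open>(s+1) div 2 = m + 1\<close> by (metis nat_int)
  qed
qed

lemma nat_floor_half: "nat \<lfloor>real s / 2\<rfloor> = s div 2"
proof -
  obtain m where "s = 2*m \<or> s = 2*m+1" by (metis oddE evenE)
  then show ?thesis
  proof
    assume s: "s = 2*m"
    have "real s / 2 = real m" using s by simp
    moreover have "s div 2 = m" using s by simp
    ultimately show ?thesis by simp
  next
    assume s: "s = 2*m+1"
    have h: "real s / 2 = real m + 1/2" using s by simp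
    have "s div 2 = m" using s by simp
    have "\<lfloor>real s / 2\<rfloor> = int m" unfolding h by (rule floor_unique) auto
    then show ?thesis using \<open>s div 2 = m\<close> by (metis nat_int)
  qed
qed

lemma bs_simp: "balance_step (u,v) l = (l(u := (l u + l v + 1) div 2))(v := (l u + l v) div 2)"
  unfolding balance_step_def Let_def case_prod_conv nat_ceil_half nat_floor_half ..

lemma conv2:
  fixes f :: "real \<Rightarrow> real"
  assumes "convex_on UNIV f" "0 \<le> t" "t \<le> 1"
  shows "f (t * x + (1 - t) * y) \<le> t * f x + (1 - t) * f y"
  using convex_onD[OF assms(1), of "1-t" x y] assms by simp

lemma pair_convex:
  fixes f :: "real \<Rightarrow> real"
  assumes cf: "convex_on UNIV f"
  shows "f (real ((p + q + 1) div 2) - a) + f (real ((p + q) div 2) - a) \<le> f (real p - a) + f (real q - a)"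
proof -
  have main: "f (real ((p + q + 1) div 2) - a) + f (real ((p + q) div 2) - a) \<le> f (real p - a) + f (real q - a)"
    if pq: "q \<le> p" for p q :: nat
  proof (cases "even (p + q)")
    case True
    then obtain m where m: "p + q = 2*m" by (metis evenE)
    then have "real p + real q = 2 * real m" by (metis of_nat_add of_nat_mult of_nat_numeral)
    moreover have "(p + q + 1) div 2 = m" "(p + q) div 2 = m" using m by presburger+
    ultimately have e1: "real ((p + q + 1) div 2) = (real p + real q) / 2" and e2: "real ((p + q) div 2) = (real p + real q) / 2"
      by simp_all
    have "f ((1/2) * (real p - a) + (1 - 1/2) * (real q - a)) \<le> (1/2) * f (real p - a) + (1 - 1/2) * f (real q - a)"
      by (rule conv2[OF cf]) auto
    moreover have "(1/2) * (real p - a) + (1 - 1/2) * (real q - a) = (real p + real q) / 2 - a" by (simp add: field_simps)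
    ultimately show ?thesis unfolding e1 e2 by simp
  next
    case False
    then obtain k where k: "p + q = 2 * k + 1" by (metis oddE)
    then have e1: "(p + q + 1) div 2 = k + 1" and e2: "(p + q) div 2 = k" by presburger+
    have "p \<noteq> q" using k by presburger
    then have pq1: "real q + 1 \<le> real p" using pq by simp
    define t where "t = (real k + 1 - real q) / (real p - real q)"
    have t0: "0 \<le> t" and t1: "t \<le> 1" unfolding t_def using pq1 k
      by (auto simp: field_simps)
    have tm: "t * (real p - real q) = real k + 1 - real q" unfolding t_def using pq1 by simp
    have x1: "t * (real p - a) + (1 - t) * (real q - a) = t * (real p - real q) + real q - a"
      by (simp add: algebra_simps)
    have x2: "(1 - t) * (real p - a) + t * (real q - a) = real p - a - t * (real p - real q)"
      by (simp add: algebra_simps)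
    have h1: "real (k+1) - a = t * (real p - a) + (1 - t) * (real q - a)"
      using x1 tm by simp
    have rk: "real p + real q = 2 * real k + 1" using k by (metis of_nat_add of_nat_mult of_nat_numeral of_nat_1)
    have h2: "real k - a = (1 - t) * (real p - a) + t * (real q - a)"
      using x2 tm rk by simp
    have "f (real (k+1) - a) \<le> t * f (real p - a) + (1 - t) * f (real q - a)"
      unfolding h1 by (rule conv2[OF cf]) (use t0 t1 in auto)
    moreover have "f (real k - a) \<le> (1 - t) * f (real p - a) + (1 - (1 - t)) * f (real q - a)"
      unfolding h2 using conv2[OF cf, of "1-t" "real p - a" "real q - a"] t0 t1 by simp
    ultimately show ?thesis unfolding e1 e2 by (simp add: algebra_simps)
  qed
  show ?thesis
  proof (cases "q \<le> p")
    case True then show ?thesis by (rule main)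
  next
    case False
    then have "p \<le> q" by simp
    from main[OF this] show ?thesis by (simp add: add.commute)
  qed
qed

lemma sum_bs:
  fixes f :: "nat \<Rightarrow> real"
  assumes "u \<noteq> v"
  shows "(\<Sum>i<n. f (balance_step (u,v) l i)) = (\<Sum>i<n. f (l i))
     + (if u < n then f ((l u + l v + 1) div 2) - f (l u) else 0)
     + (if v < n then f ((l u + l v) div 2) - f (l v) else 0)"
proof -
  have "\<And>i. f (balance_step (u,v) l i) = f (l i) + (if i = u then f ((l u + l v + 1) div 2) - f (l u) else 0)
     + (if i = v then f ((l u + l v) div 2) - f (l v) else 0)"
    using assms by (auto simp: bs_simp)
  then have "(\<Sum>i<n. f (balance_step (u,v) l i)) = (\<Sum>i<n. f (l i) + (if i = u then f ((l u + l v + 1) div 2) - f (l u) else 0)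
     + (if i = v then f ((l u + l v) div 2) - f (l v) else 0))" by simp
  also have "\<dots> = (\<Sum>i<n. f (l i))
     + (if u < n then f ((l u + l v + 1) div 2) - f (l u) else 0)
     + (if v < n then f ((l u + l v) div 2) - f (l v) else 0)"
    by (simp add: sum.distrib)
  finally show ?thesis .
qed

lemma sum_bs':
  fixes f :: "nat \<Rightarrow> real"
  assumes "(u,v) \<in> node_pairs n"
  shows "(\<Sum>i<n. f (balance_step (u,v) l i)) = (\<Sum>i<n. f (l i))
     - (f (l u) + f (l v) - f ((l u + l v + 1) div 2) - f ((l u + l v) div 2))"
  using assms sum_bs[where u=u and v=v and f=f and n=n and l=l] unfolding node_pairs_def by auto

lemma sum_preserved:
  assumes "p \<in> node_pairs n"
  shows "(\<Sum>i<n. balance_step p l i) = (\<Sum>i<n. l i)"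
proof -
  obtain u v where p: "p = (u,v)" by (cases p)
  have "(l u + l v + 1) div 2 + (l u + l v) div 2 = l u + l v" by presburger
  then have "real ((l u + l v + 1) div 2) + real ((l u + l v) div 2) = real (l u) + real (l v)"
    by (metis of_nat_add)
  then have "(\<Sum>i<n. real (balance_step p l i)) = (\<Sum>i<n. real (l i))"
    using sum_bs'[where u=u and v=v and n=n and f=real and l=l] assms p by simp
  then show ?thesis by (metis of_nat_eq_iff of_nat_sum)
qed

lemma sum_convex:
  fixes f :: "real \<Rightarrow> real"
  assumes cf: "convex_on UNIV f" and p: "p \<in> node_pairs n"
  shows "(\<Sum>i<n. f (real (balance_step p l i) - a)) \<le> (\<Sum>i<n. f (real (l i) - a))"
proof -
  obtain u v where pe: "p = (u,v)" by (cases p)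
  show ?thesis
    using sum_bs'[where u=u and v=v and n=n and f="\<lambda>x. f (real x - a)" and l=l] p pe pair_convex[OF cf, of "l u" "l v" a] by simp
qed

lemma pair_drop:
  fixes p q :: nat
  assumes "q + 2 \<le> p"
  shows "(real ((p + q + 1) div 2) - a)^2 + (real ((p + q) div 2) - a)^2 + 1 \<le> (real p - a)^2 + (real q - a)^2"
proof -
  obtain k where "p + q = 2*k \<or> p + q = 2*k+1" by (metis oddE evenE)
  then show ?thesis
  proof
    assume k: "p + q = 2*k"
    then have e: "(p + q + 1) div 2 = k" "(p + q) div 2 = k" by presburger+
    define d where "d = p - k"
    have d: "p = k + d" "q + d = k" "d \<ge> 1" using k assms unfolding d_def by linarith+
    have r: "real p = real k + real d" "real q = real k - real d" "real d \<ge> 1" using d by auto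
    have "(real p - a)^2 + (real q - a)^2 = 2*(real k - a)^2 + 2*(real d)^2"
      unfolding r(1,2) by (simp add: power2_eq_square algebra_simps)
    moreover have "(real d)^2 \<ge> 1" using r(3) by (simp add: one_le_power)
    ultimately show ?thesis unfolding e by simp
  next
    assume k: "p + q = 2*k+1"
    then have e: "(p + q + 1) div 2 = k + 1" "(p + q) div 2 = k" by presburger+
    define d where "d = p - k - 1"
    have d: "p = k + 1 + d" "q + d = k" "d \<ge> 1" using k assms unfolding d_def by linarith+
    have "real p = real k + 1 + real d" "real q = real k - real d" "real d \<ge> 1" using d by auto
    then have r: "real p = real k + 1 + real d" "real q = real k - real d" "real d \<ge> 1" .
    have "(real p - a)^2 + (real q - a)^2 = (real k + 1 - a)^2 + (real k - a)^2 + 2*(real d)^2 + 2 * real d"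
      unfolding r(1,2) by (simp add: power2_eq_square algebra_simps)
    moreover have "(real d)^2 \<ge> 1" using r(3) by (simp add: one_le_power)
    moreover have rk: "real (k+1) = real k + 1" by simp
    ultimately show ?thesis unfolding e rk using r(3) by linarith
  qed
qed



lemma convex_sqmax: "convex_on UNIV (\<lambda>y::real. (max 0 y)^2)"
proof (rule convex_onI)
  fix t x y :: real assume t: "0 < t" "t < 1"
  define X where "X = max 0 x"
  define Y where "Y = max 0 y"
  have "(1 - t) * x \<le> (1 - t) * X" unfolding X_def using t by (intro mult_left_mono) auto
  moreover have "t * y \<le> t * Y" unfolding Y_def using t by (intro mult_left_mono) auto
  moreover have "0 \<le> (1 - t) * X + t * Y" unfolding X_def Y_def using t by simp
  ultimately have "max 0 ((1 - t) * x + t * y) \<le> (1 - t) * X + t * Y" by simp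
  moreover have "0 \<le> max 0 ((1 - t) * x + t * y)" by simp
  ultimately have "(max 0 ((1 - t) * x + t * y))^2 \<le> ((1 - t) * X + t * Y)^2"
    by (rule power_mono)
  also have "\<dots> \<le> (1 - t) * X^2 + t * Y^2"
    using convex_onD[OF convex_power2, of t X Y] t by simp
  finally show "(max 0 ((1 - t) *\<^sub>R x + t *\<^sub>R y))\<^sup>2 \<le> (1 - t) * (max 0 x)\<^sup>2 + t * (max 0 y)\<^sup>2"
    unfolding X_def Y_def by simp
qed auto

lemma convex_affine:
  fixes g :: "real \<Rightarrow> real"
  assumes "convex_on UNIV g"
  shows "convex_on UNIV (\<lambda>x. g (\<alpha> * x + \<beta>))"
proof (rule convex_onI)
  fix t x y :: real assume t: "0 < t" "t < 1"
  have "\<alpha> * ((1 - t) * x + t * y) + \<beta> = (1 - t) * (\<alpha> * x + \<beta>) + t * (\<alpha> * y + \<beta>)"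
    by (simp add: algebra_simps)
  then show "g (\<alpha> * ((1 - t) *\<^sub>R x + t *\<^sub>R y) + \<beta>) \<le> (1 - t) * g (\<alpha> * x + \<beta>) + t * g (\<alpha> * y + \<beta>)"
    using convex_onD[OF assms, of t "\<alpha> * x + \<beta>" "\<alpha> * y + \<beta>"] t by simp
qed auto

definition hup :: "real \<Rightarrow> real \<Rightarrow> real" where "hup c x = (max 0 (x - c))^2"
definition hdn :: "real \<Rightarrow> real \<Rightarrow> real" where "hdn c x = (max 0 (- x - c))^2"

lemma convex_hup: "convex_on UNIV (hup c)"
  using convex_affine[OF convex_sqmax, of 1 "-c"] unfolding hup_def by simp

lemma convex_hdn: "convex_on UNIV (hdn c)"
  using convex_affine[OF convex_sqmax, of "-1" "-c"] unfolding hdn_def by simp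

lemma sqmax_mono: "x \<le> y \<Longrightarrow> (max 0 x)^2 \<le> (max (0::real) y)^2"
  by (rule power_mono) auto

lemma spread:
  fixes n :: nat and l :: "nat \<Rightarrow> nat"
  assumes n: "n \<ge> 1" and a: "a = real (\<Sum>i<n. l i) / real n"
    and big: "(\<Sum>i<n. (real (l i) - a)^2) \<ge> real n"
  shows "\<exists>u<n. \<exists>v<n. l v + 2 \<le> l u"
proof (rule ccontr)
  assume "\<not> ?thesis"
  then have close: "\<And>u v. u < n \<Longrightarrow> v < n \<Longrightarrow> l u \<le> l v + 1" by force
  define k where "k = Min (l ` {..<n})"
  have "k \<in> l ` {..<n}" unfolding k_def using n by (intro Min_in) (auto simp: lessThan_empty_iff)
  then obtain j where j: "j < n" "l j = k" by auto
  have kle: "\<And>i. i < n \<Longrightarrow> k \<le> l i" unfolding k_def by auto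
  have vals: "\<And>i. i < n \<Longrightarrow> l i = k \<or> l i = k + 1"
    using close[OF _ j(1)] kle j(2) by fastforce
  define y where "y i = real (l i) - real k" for i
  define b where "b = a - real k"
  have ysq: "\<And>i. i < n \<Longrightarrow> (y i)^2 = y i" using vals unfolding y_def by fastforce
  have np: "real n > 0" using n by simp
  have na: "real n * a = real (\<Sum>i<n. l i)"
  proof -
    have "real n * (real (\<Sum>i<n. l i) / real n) = real (\<Sum>i<n. l i)"
      using np by (simp only: times_divide_eq_right) (rule nonzero_mult_div_cancel_left, simp)
    then show ?thesis using a by simp
  qed
  have sy: "(\<Sum>i<n. y i) = real n * b"
  proof -
    have na': "(\<Sum>i<n. real (l i)) = a * real n" using na by (simp add: mult.commute)
    show ?thesis unfolding y_def b_def by (simp add: sum_subtractf na' algebra_simps)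
  qed
  have "(\<Sum>i<n. (real (l i) - a)^2) = (\<Sum>i<n. (y i - b)^2)"
    unfolding y_def b_def by simp
  also have "\<dots> = (\<Sum>i<n. y i - 2 * b * y i + b^2)"
    by (intro sum.cong refl) (simp add: power2_diff ysq)
  also have "\<dots> = real n * b - 2 * b * (real n * b) + real n * b^2"
    by (simp add: sum.distrib sum_subtractf sum_distrib_left[symmetric] sy)
  also have "\<dots> = real n * (b - b^2)" by (simp add: power2_eq_square algebra_simps)
  also have "\<dots> \<le> real n * (1/4)"
  proof (rule mult_left_mono)
    have "0 \<le> (b - 1/2)^2" by simp
    then show "b - b^2 \<le> 1/4" by (simp add: power2_eq_square algebra_simps)
  qed simp
  finally show False using big n by simp
qed

lemma count_big:
  fixes n :: nat and l :: "nat \<Rightarrow> nat"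
  assumes d: "d \<ge> 0"
  shows "real (card {v\<in>{..<n}. d < \<bar>real (l v) - a\<bar>}) * d^2 \<le> (\<Sum>i<n. (real (l i) - a)^2)"
proof -
  let ?S = "{v\<in>{..<n}. d < \<bar>real (l v) - a\<bar>}"
  have "real (card ?S) * d^2 = (\<Sum>i\<in>?S. d^2)" by simp
  also have "\<dots> \<le> (\<Sum>i\<in>?S. (real (l i) - a)^2)"
  proof (rule sum_mono)
    fix i assume "i \<in> ?S"
    then have "d \<le> \<bar>real (l i) - a\<bar>" by auto
    then have "d^2 \<le> \<bar>real (l i) - a\<bar>^2" using d by (rule power_mono)
    then show "d^2 \<le> (real (l i) - a)^2" by simp
  qed
  also have "\<dots> \<le> (\<Sum>i<n. (real (l i) - a)^2)"
    by (intro sum_mono2) auto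
  finally show ?thesis .
qed



lemma real_card_pairs: "n \<ge> 2 \<Longrightarrow> real (card (node_pairs n)) = real n * (real n - 1)"
  by (simp add: card_node_pairs of_nat_diff)

lemma gen_contract:
  fixes f :: "real \<Rightarrow> real" and l :: "nat \<Rightarrow> nat" and n :: nat
  assumes n2: "n \<ge> 2" and cf: "convex_on UNIV f" and f0: "\<And>x. f x \<ge> 0"
  and Ab: "Ab \<subseteq> {..<n}" and Lo: "Lo \<subseteq> {..<n}" and disj: "Ab \<inter> Lo = {}"
  and zero: "\<And>u. u < n \<Longrightarrow> u \<notin> Ab \<Longrightarrow> f (real (l u) - a) = 0"
  and cLo: "real (card Lo) \<ge> real n / 2"
  and dec: "\<And>u v. u \<in> Ab \<Longrightarrow> v \<in> Lo \<Longrightarrow>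
     f (real ((l u + l v + 1) div 2) - a) + f (real ((l u + l v) div 2) - a) \<le> f (real (l u) - a) / 2"
  shows "(\<Sum>p\<in>node_pairs n. \<Sum>i<n. f (real (balance_step p l i) - a))
     \<le> real (card (node_pairs n)) * (1 - 1/(4*real n)) * (\<Sum>i<n. f (real (l i) - a))"
proof -
  define F where "F x = f (real x - a)" for x
  define H where "H = (\<Sum>i<n. F (l i))"
  define D where "D p = (case p of (u,v) \<Rightarrow> F (l u) + F (l v) - F ((l u + l v + 1) div 2) - F ((l u + l v) div 2))" for p
  have H0: "H \<ge> 0" unfolding H_def F_def using f0 by (simp add: sum_nonneg)
  have eq: "(\<Sum>i<n. F (balance_step p l i)) = H - D p" if p: "p \<in> node_pairs n" for p
  proof -
    obtain u v where pe: "p = (u,v)" by (cases p)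
    show ?thesis unfolding H_def D_def pe using sum_bs'[where u=u and v=v and n=n and f=F and l=l] p pe by simp
  qed
  have D0: "D p \<ge> 0" for p
  proof -
    obtain u v where pe: "p = (u,v)" by (cases p)
    show ?thesis unfolding D_def F_def pe using pair_convex[OF cf, of "l u" "l v" a] by simp
  qed
  have Duv: "D (u,v) \<ge> F (l u) / 2" if "u \<in> Ab" "v \<in> Lo" for u v
    using dec[OF that] f0[of "real (l v) - a"] unfolding D_def F_def by simp
  have sub: "Ab \<times> Lo \<subseteq> node_pairs n" using Ab Lo disj unfolding node_pairs_def by auto
  have finAb: "finite Ab" using Ab finite_subset by blast
  have finLo: "finite Lo" using Lo finite_subset by blast
  have sAb: "(\<Sum>u\<in>Ab. F (l u)) = H"
    unfolding H_def by (rule sum.mono_neutral_left) (use Ab zero in \<open>auto simp: F_def\<close>)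
  have "real n / 4 * H = (\<Sum>u\<in>Ab. real n / 4 * F (l u))" by (simp only: sAb[symmetric] sum_distrib_left)
  also have "\<dots> \<le> (\<Sum>u\<in>Ab. real (card Lo) * (F (l u) / 2))"
  proof (rule sum_mono)
    fix u assume "u \<in> Ab"
    have "F (l u) \<ge> 0" unfolding F_def using f0 by simp
    then have "real n / 2 * (F (l u) / 2) \<le> real (card Lo) * (F (l u) / 2)"
      using cLo by (intro mult_right_mono) auto
    then show "real n / 4 * F (l u) \<le> real (card Lo) * (F (l u) / 2)" by simp
  qed
  also have "\<dots> = (\<Sum>u\<in>Ab. \<Sum>v\<in>Lo. F (l u) / 2)" by simp
  also have "\<dots> \<le> (\<Sum>u\<in>Ab. \<Sum>v\<in>Lo. D (u,v))"
    by (intro sum_mono Duv)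
  also have "\<dots> = (\<Sum>p\<in>Ab \<times> Lo. D p)" by (simp add: sum.cartesian_product)
  also have "\<dots> \<le> (\<Sum>p\<in>node_pairs n. D p)"
    by (rule sum_mono2[OF node_pairs_finite sub]) (simp add: D0)
  finally have key: "real n / 4 * H \<le> (\<Sum>p\<in>node_pairs n. D p)" .
  have "(\<Sum>p\<in>node_pairs n. \<Sum>i<n. f (real (balance_step p l i) - a)) = (\<Sum>p\<in>node_pairs n. H - D p)"
    using eq unfolding F_def by (intro sum.cong) auto
  also have "\<dots> = real (card (node_pairs n)) * H - (\<Sum>p\<in>node_pairs n. D p)"
    by (simp add: sum_subtractf)
  also have "\<dots> \<le> real (card (node_pairs n)) * H - real n / 4 * H" using key by simp
  also have "\<dots> \<le> real (card (node_pairs n)) * (1 - 1/(4*real n)) * H"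
  proof -
    have np: "real n > 0" using n2 by simp
    have "real (card (node_pairs n)) * (1 - 1/(4*real n)) * H = real (card (node_pairs n)) * H - (real n - 1) / 4 * H"
      using np by (simp add: real_card_pairs[OF n2] field_simps)
    moreover have "(real n - 1) / 4 * H \<le> real n / 4 * H" using H0 by (intro mult_right_mono) auto
    ultimately show ?thesis by simp
  qed
  finally show ?thesis unfolding H_def F_def .
qed



lemma phi_mono:
  assumes "p \<in> node_pairs n"
  shows "potential n a (balance_step p l) \<le> potential n a l"
  unfolding potential_def using sum_convex[OF convex_power2 assms, of l a] by simp

lemma div2_le: "real (m div 2) \<le> real m / 2"
proof -
  have "2 * (m div 2) \<le> m" by presburger
  then have "real (2 * (m div 2)) \<le> real m" by (simp only: of_nat_le_iff)
  then show ?thesis by simp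
qed

lemma div2_ge: "real (m div 2) \<ge> (real m - 1) / 2"
proof -
  have "m \<le> 2 * (m div 2) + 1" by presburger
  then have "real m \<le> real (2 * (m div 2) + 1)" by (simp only: of_nat_le_iff)
  then have "real m \<le> 2 * real (m div 2) + 1" by simp
  then show ?thesis by simp
qed

lemma card_low:
  fixes n :: nat and l :: "nat \<Rightarrow> nat" and c :: real
  assumes c: "c \<ge> 3" and phi: "potential n a l < real n"
    and Lo: "Lo \<subseteq> {..<n}" and comp: "\<And>v. v < n \<Longrightarrow> v \<notin> Lo \<Longrightarrow> c - 1 < \<bar>real (l v) - a\<bar>"
  shows "real (card Lo) \<ge> real n / 2"
proof -
  let ?B = "{v\<in>{..<n}. c - 1 < \<bar>real (l v) - a\<bar>}"
  have "real (card ?B) * (c - 1)^2 \<le> potential n a l"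
    unfolding potential_def using c by (intro count_big) auto
  moreover have "(c - 1)^2 \<ge> 4"
  proof -
    have "(2::real)^2 \<le> (c - 1)^2" using c by (intro power_mono) auto
    then show ?thesis by simp
  qed
  ultimately have "real (card ?B) * 4 < real n" using phi
    using mult_left_mono[of 4 "(c-1)^2" "real (card ?B)"] by simp
  moreover have "card ({..<n} - Lo) \<le> card ?B"
    using comp by (intro card_mono) auto
  moreover have "card ({..<n} - Lo) = n - card Lo" using Lo by (simp add: card_Diff_subset finite_subset)
  moreover have "card Lo \<le> n" using Lo card_mono[of "{..<n}" Lo] by simp
  ultimately have "real (n - card Lo) * 4 < real n"
    by (smt (verit, best) of_nat_le_iff)
  then show ?thesis using \<open>card Lo \<le> n\<close> by (simp add: of_nat_diff)
qed

lemma up_contract: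
  fixes n :: nat and l :: "nat \<Rightarrow> nat" and c :: real
  assumes n2: "n \<ge> 2" and c: "c \<ge> 3" and phi: "potential n a l < real n"
  shows "(\<Sum>p\<in>node_pairs n. \<Sum>i<n. hup c (real (balance_step p l i) - a))
     \<le> real (card (node_pairs n)) * (1 - 1/(4*real n)) * (\<Sum>i<n. hup c (real (l i) - a))"
proof (rule gen_contract[OF n2 convex_hup, where Ab="{u\<in>{..<n}. real (l u) - a > c}" and Lo="{v\<in>{..<n}. real (l v) - a \<le> c - 1}"])
  show "\<And>x. 0 \<le> hup c x" unfolding hup_def by simp
  show "\<And>u. u < n \<Longrightarrow> u \<notin> {u \<in> {..<n}. c < real (l u) - a} \<Longrightarrow> hup c (real (l u) - a) = 0"
    unfolding hup_def by auto
  show "real n / 2 \<le> real (card {v \<in> {..<n}. real (l v) - a \<le> c - 1})"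
    by (rule card_low[OF c phi]) auto
  fix u v assume u: "u \<in> {u \<in> {..<n}. c < real (l u) - a}" and v: "v \<in> {v \<in> {..<n}. real (l v) - a \<le> c - 1}"
  define xu where "xu = real (l u) - a"
  have xu: "xu > c" using u unfolding xu_def by simp
  have xv: "real (l v) - a \<le> c - 1" using v by simp
  have bnd: "hup c (y - a) \<le> hup c xu / 4" if "y \<le> (real (l u) + real (l v) + 1) / 2" for y
  proof -
    have "y - a - c \<le> (xu - c) / 2" using that xv unfolding xu_def by simp
    then have "hup c (y - a) \<le> (max 0 ((xu - c)/2))^2" unfolding hup_def by (intro sqmax_mono) simp
    also have "\<dots> = hup c xu / 4" using xu unfolding hup_def by (simp add: power2_eq_square)
    finally show ?thesis .
  qed
  have "hup c (real ((l u + l v + 1) div 2) - a) \<le> hup c xu / 4"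
    by (rule bnd) (use div2_le[of "l u + l v + 1"] in simp)
  moreover have "hup c (real ((l u + l v) div 2) - a) \<le> hup c xu / 4"
    by (rule bnd) (use div2_le[of "l u + l v"] in simp)
  ultimately show "hup c (real ((l u + l v + 1) div 2) - a) + hup c (real ((l u + l v) div 2) - a) \<le> hup c (real (l u) - a) / 2"
    unfolding xu_def by simp
qed auto

lemma dn_contract:
  fixes n :: nat and l :: "nat \<Rightarrow> nat" and c :: real
  assumes n2: "n \<ge> 2" and c: "c \<ge> 3" and phi: "potential n a l < real n"
  shows "(\<Sum>p\<in>node_pairs n. \<Sum>i<n. hdn c (real (balance_step p l i) - a))
     \<le> real (card (node_pairs n)) * (1 - 1/(4*real n)) * (\<Sum>i<n. hdn c (real (l i) - a))"
proof (rule gen_contract[OF n2 convex_hdn, where Ab="{u\<in>{..<n}. real (l u) - a < - c}" and Lo="{v\<in>{..<n}. real (l v) - a \<ge> - (c - 1)}"])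
  show "\<And>x. 0 \<le> hdn c x" unfolding hdn_def by simp
  show "\<And>u. u < n \<Longrightarrow> u \<notin> {u \<in> {..<n}. real (l u) - a < - c} \<Longrightarrow> hdn c (real (l u) - a) = 0"
    unfolding hdn_def by auto
  show "real n / 2 \<le> real (card {v \<in> {..<n}. real (l v) - a \<ge> - (c - 1)})"
    by (rule card_low[OF c phi]) auto
  fix u v assume u: "u \<in> {u \<in> {..<n}. real (l u) - a < - c}" and v: "v \<in> {v \<in> {..<n}. real (l v) - a \<ge> - (c - 1)}"
  define xu where "xu = real (l u) - a"
  have xu: "xu < - c" using u unfolding xu_def by simp
  have xv: "real (l v) - a \<ge> - (c - 1)" using v by simp
  have bnd: "hdn c (y - a) \<le> hdn c xu / 4" if "y \<ge> (real (l u) + real (l v) - 1) / 2" for y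
  proof -
    have "- (y - a) - c \<le> (- xu - c) / 2" using that xv unfolding xu_def by simp
    then have "hdn c (y - a) \<le> (max 0 ((- xu - c)/2))^2" unfolding hdn_def by (intro sqmax_mono) simp
    also have "\<dots> = hdn c xu / 4" using xu unfolding hdn_def by (simp add: power2_eq_square)
    finally show ?thesis .
  qed
  have "hdn c (real ((l u + l v + 1) div 2) - a) \<le> hdn c xu / 4"
    by (rule bnd) (use div2_ge[of "l u + l v + 1"] in simp)
  moreover have "hdn c (real ((l u + l v) div 2) - a) \<le> hdn c xu / 4"
    by (rule bnd) (use div2_ge[of "l u + l v"] in simp)
  ultimately show "hdn c (real ((l u + l v + 1) div 2) - a) + hdn c (real ((l u + l v) div 2) - a) \<le> hdn c (real (l u) - a) / 2"
    unfolding xu_def by simp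
qed auto



lemma sets_S:
  assumes "Measurable.pred (pair_stream_space n) P"
  shows "{\<omega>. P \<omega>} \<in> sets (pair_stream_space n)"
proof -
  have "{\<omega> \<in> space (pair_stream_space n). P \<omega>} \<in> sets (pair_stream_space n)" using assms by measurable
  then show ?thesis by simp
qed

lemma phi_nonneg: "potential n a l \<ge> 0"
  unfolding potential_def by (simp add: sum_nonneg)

lemma phi_drop:
  assumes "(u,v) \<in> node_pairs n" "l v + 2 \<le> l u"
  shows "potential n a (balance_step (u,v) l) + 1 \<le> potential n a l"
  unfolding potential_def
  using sum_bs'[where u=u and v=v and n=n and f="\<lambda>x. (real x - a)^2" and l=l] assms(1)
    pair_drop[OF assms(2), of a] by simp

lemma sum_drop_one:
  fixes g h :: "'a \<Rightarrow> real"
  assumes "finite A" "p0 \<in> A" "\<And>p. p \<in> A \<Longrightarrow> g p \<le> h p" "g p0 + 1 \<le> h p0"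
  shows "(\<Sum>p\<in>A. g p) + 1 \<le> (\<Sum>p\<in>A. h p)"
proof -
  have "(\<Sum>p\<in>A. g p) = g p0 + (\<Sum>p\<in>A - {p0}. g p)" using assms by (simp add: sum.remove)
  also have "\<dots> \<le> g p0 + (\<Sum>p\<in>A - {p0}. h p)" using assms by (intro add_left_mono sum_mono) auto
  also have "(\<Sum>p\<in>A. h p) = h p0 + (\<Sum>p\<in>A - {p0}. h p)" using assms by (simp add: sum.remove)
  ultimately show ?thesis using assms(4) by linarith
qed

lemma T1_finite_prob:
  fixes l0 :: "nat \<Rightarrow> nat"
  assumes n2: "n \<ge> 2" and a: "a = avg_load n l0"
  shows "\<exists>t. emeasure (pair_stream_space n) {\<omega>. \<not> potential n a (load l0 \<omega> t) < real n} \<le> ennreal (1 / real n)"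
proof -
  define P where "P = node_pairs n"
  define Phim where "Phim = max (potential n a l0) (real n)"
  define rho where "rho = 1 - 1 / (real (card P) * Phim)"
  define I where "I = {l. (\<Sum>i<n. l i) = (\<Sum>i<n. l0 i) \<and> potential n a l \<le> Phim}"
  define F where "F l = (if potential n a l \<ge> real n then potential n a l else 0)" for l
  have cP: "real (card P) \<ge> 2"
  proof -
    have "2 * 1 \<le> real n * (real n - 1)" using n2 by (intro mult_mono) auto
    then show ?thesis unfolding P_def real_card_pairs[OF n2] by simp
  qed
  have Phim: "Phim \<ge> 2" unfolding Phim_def using n2 by simp
  have pr: "real (card P) * Phim \<ge> 2 * 2" using cP Phim by (intro mult_mono) auto
  then have "1 / (real (card P) * Phim) \<le> 1" "0 < 1 / (real (card P) * Phim)" by simp_all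
  then have rho0: "rho \<ge> 0" and rho1: "rho < 1" unfolding rho_def by simp_all
  have F0: "F l \<ge> 0" for l unfolding F_def using phi_nonneg by simp
  have closed: "balance_step p l \<in> I" if "l \<in> I" "p \<in> node_pairs n" for l p
    using that phi_mono[OF that(2), of a l] sum_preserved[OF that(2), of l] unfolding I_def by auto
  have step: "(\<Sum>p\<in>node_pairs n. F (balance_step p l)) \<le> real (card (node_pairs n)) * rho * F l" if l: "l \<in> I" for l
  proof (cases "potential n a l \<ge> real n")
    case True
    have aa: "a = real (\<Sum>i<n. l i) / real n" using l a unfolding I_def avg_load_def by simp
    obtain u v where uv: "u < n" "v < n" "l v + 2 \<le> l u" using spread[OF _ aa True[unfolded potential_def]] n2 by auto
    have uvP: "(u,v) \<in> P" using uv unfolding P_def node_pairs_def by auto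
    have "(\<Sum>p\<in>P. F (balance_step p l)) + 1 \<le> (\<Sum>p\<in>P. potential n a l)"
    proof (rule sum_drop_one[OF _ uvP])
      show "finite P" unfolding P_def by (rule node_pairs_finite)
      show "F (balance_step p l) \<le> potential n a l" if "p \<in> P" for p
        using phi_mono[of p n a l] that phi_nonneg[of n a "balance_step p l"] unfolding F_def P_def by auto
      show "F (balance_step (u,v) l) + 1 \<le> potential n a l"
        using phi_drop[of u v n l a] uvP uv phi_nonneg[of n a "balance_step (u,v) l"] unfolding F_def P_def by auto
    qed
    moreover have "potential n a l \<le> Phim" using l unfolding I_def by simp
    moreover have "real (card P) * rho * F l = real (card P) * potential n a l - potential n a l / Phim"
      unfolding rho_def F_def using True cP Phim by (simp add: field_simps)
    moreover have "potential n a l / Phim \<le> 1" using \<open>potential n a l \<le> Phim\<close> Phim by simp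
    ultimately show ?thesis unfolding P_def by simp
  next
    case False
    then have "F (balance_step p l) = 0" if "p \<in> node_pairs n" for p
      using phi_mono[OF that, of a l] unfolding F_def by auto
    then show ?thesis using False unfolding F_def by simp
  qed
  have l0I: "l0 \<in> I" unfolding I_def Phim_def by simp
  obtain t where t: "rho ^ t < 1 / Phim" using real_arch_pow_inv[OF _ rho1, of "1/Phim"] Phim by auto
  have int: "(\<integral>\<^sup>+\<omega>. ennreal (F (load l0 \<omega> t)) \<partial>pair_stream_space n) \<le> ennreal (rho ^ t * F l0)"
    by (rule contraction[OF n2 closed step F0 rho0 l0I])
  have Fl0: "F l0 \<le> Phim" unfolding F_def Phim_def by auto
  have "rho ^ t * F l0 \<le> 1"
  proof -
    have "rho ^ t * F l0 \<le> (1 / Phim) * Phim" using t Fl0 F0[of l0] rho0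
      by (intro mult_mono) auto
    then show ?thesis using Phim by simp
  qed
  have "emeasure (pair_stream_space n) {\<omega>. \<not> potential n a (load l0 \<omega> t) < real n}
      = (\<integral>\<^sup>+\<omega>. indicator {\<omega>. \<not> potential n a (load l0 \<omega> t) < real n} \<omega> \<partial>pair_stream_space n)"
    by (subst nn_integral_indicator) (auto intro!: sets_S)
  also have "\<dots> \<le> (\<integral>\<^sup>+\<omega>. ennreal (1 / real n) * ennreal (F (load l0 \<omega> t)) \<partial>pair_stream_space n)"
  proof (rule nn_integral_mono)
    fix \<omega>
    show "indicator {\<omega>. \<not> potential n a (load l0 \<omega> t) < real n} \<omega> \<le> ennreal (1 / real n) * ennreal (F (load l0 \<omega> t))"
    proof (cases "potential n a (load l0 \<omega> t) < real n")
      case False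
      then have "1 \<le> 1 / real n * F (load l0 \<omega> t)" unfolding F_def using n2 by (simp add: field_simps)
      then show ?thesis using False by (simp add: ennreal_mult'[symmetric] ennreal_leI)
    qed simp
  qed
  also have "\<dots> = ennreal (1 / real n) * (\<integral>\<^sup>+\<omega>. ennreal (F (load l0 \<omega> t)) \<partial>pair_stream_space n)"
    by (rule nn_integral_cmult) measurable
  also have "\<dots> \<le> ennreal (1 / real n) * ennreal (rho ^ t * F l0)"
    by (rule mult_left_mono[OF int]) simp
  also have "\<dots> \<le> ennreal (1 / real n) * ennreal 1"
    by (rule mult_left_mono) (use \<open>rho ^ t * F l0 \<le> 1\<close> in auto)
  finally show ?thesis by (intro exI[of _ t]) simp
qed

lemma huphdn_le: "hup c x + hdn c x \<le> x^2" if "c \<ge> 0" for c x :: real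
proof (cases "x > c")
  case True
  then have "hdn c x = 0" unfolding hdn_def using that by simp
  moreover have "hup c x = (x - c)^2" unfolding hup_def using True by simp
  moreover have "(x - c)^2 \<le> x^2" using True that by (intro power_mono) auto
  ultimately show ?thesis by simp
next
  case False
  then have h0: "hup c x = 0" unfolding hup_def by simp
  show ?thesis
  proof (cases "x < - c")
    case True
    then have "hdn c x = (- x - c)^2" unfolding hdn_def by simp
    moreover have "(- x - c)^2 \<le> (-x)^2" using True that by (intro power_mono) auto
    ultimately show ?thesis using h0 by simp
  next
    case False
    then have "hdn c x = 0" unfolding hdn_def by simp
    then show ?thesis using h0 by simp
  qed
qed

lemma rho_pow_bound:
  fixes n :: nat
  assumes n2: "n \<ge> 2" and t0: "real t0 \<ge> 8 * real n * ln (real n)"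
  shows "(1 - 1 / (4 * real n)) ^ t0 \<le> 1 / (real n)^2"
proof -
  have np: "real n > 0" using n2 by simp
  have r0: "0 \<le> 1 - 1 / (4 * real n)" using n2 by (simp add: field_simps)
  have "1 - 1 / (4 * real n) \<le> exp (- (1 / (4 * real n)))"
    using exp_ge_add_one_self[of "- (1 / (4 * real n))"] by simp
  then have "(1 - 1 / (4 * real n)) ^ t0 \<le> exp (- (1 / (4 * real n))) ^ t0"
    using r0 by (intro power_mono) auto
  also have "\<dots> = exp (real t0 * (- (1 / (4 * real n))))" by (rule exp_of_nat_mult[symmetric])
  also have "\<dots> \<le> exp (- (2 * ln (real n)))"
  proof (subst exp_le_cancel_iff)
    have "real t0 / (4 * real n) \<ge> 8 * real n * ln (real n) / (4 * real n)"
      using t0 np by (intro divide_right_mono) auto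
    also have "8 * real n * ln (real n) / (4 * real n) = 2 * ln (real n)" using np by simp
    finally show "real t0 * - (1 / (4 * real n)) \<le> - (2 * ln (real n))" by simp
  qed
  also have "\<dots> = 1 / (real n)^2"
  proof -
    have "exp (2 * ln (real n)) = exp (ln (real n)) * exp (ln (real n))"
      by (simp only: mult_2 exp_add)
    also have "\<dots> = (real n)^2" using np by (simp add: power2_eq_square)
    finally show ?thesis by (simp only: exp_minus' )
  qed
  finally show ?thesis .
qed

lemma bal_prob:
  fixes n :: nat and c :: real
  assumes n2: "n \<ge> 2" and c: "c \<ge> 3" and t0: "real t0 \<ge> 8 * real n * ln (real n)"
    and phi: "potential n a l' < real n"
  shows "(\<integral>\<^sup>+\<omega>. (if balanced_within n a (2*c) (load l' \<omega> t0) then 0 else 1) \<partial>pair_stream_space n) \<le> ennreal (1 / real n)"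
proof -
  define rho where "rho = 1 - 1 / (4 * real n)"
  define I where "I = {l. potential n a l < real n}"
  define F where "F l = (\<Sum>i<n. hup c (real (l i) - a) + hdn c (real (l i) - a))" for l
  have np: "real n > 0" using n2 by simp
  have rho0: "rho \<ge> 0" unfolding rho_def using n2 by (simp add: field_simps)
  have hu0: "hup c x \<ge> 0" for x unfolding hup_def by simp
  have hd0: "hdn c x \<ge> 0" for x unfolding hdn_def by simp
  have F0: "F l \<ge> 0" for l unfolding F_def using hu0 hd0 by (simp add: sum_nonneg add_nonneg_nonneg)
  have closed: "balance_step p l \<in> I" if "l \<in> I" "p \<in> node_pairs n" for l p
    using that phi_mono[OF that(2), of a l] unfolding I_def by auto
  have step: "(\<Sum>p\<in>node_pairs n. F (balance_step p l)) \<le> real (card (node_pairs n)) * rho * F l" if l: "l \<in> I" for l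
  proof -
    have lp: "potential n a l < real n" using l unfolding I_def by simp
    have "(\<Sum>p\<in>node_pairs n. F (balance_step p l)) = (\<Sum>p\<in>node_pairs n. \<Sum>i<n. hup c (real (balance_step p l i) - a))
        + (\<Sum>p\<in>node_pairs n. \<Sum>i<n. hdn c (real (balance_step p l i) - a))"
      unfolding F_def by (simp add: sum.distrib)
    also have "\<dots> \<le> real (card (node_pairs n)) * rho * (\<Sum>i<n. hup c (real (l i) - a))
        + real (card (node_pairs n)) * rho * (\<Sum>i<n. hdn c (real (l i) - a))"
      unfolding rho_def by (intro add_mono up_contract[OF n2 c lp] dn_contract[OF n2 c lp])
    also have "\<dots> = real (card (node_pairs n)) * rho * F l"
      unfolding F_def by (simp add: sum.distrib algebra_simps)
    finally show ?thesis .
  qed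
  have l'I: "l' \<in> I" using phi unfolding I_def by simp
  have int: "(\<integral>\<^sup>+\<omega>. ennreal (F (load l' \<omega> t0)) \<partial>pair_stream_space n) \<le> ennreal (rho ^ t0 * F l')"
    by (rule contraction[OF n2 closed step F0 rho0 l'I])
  have Fl': "F l' \<le> real n"
  proof -
    have "F l' \<le> potential n a l'" unfolding F_def potential_def
      by (intro sum_mono huphdn_le) (use c in simp)
    then show ?thesis using phi by simp
  qed
  have rp: "rho ^ t0 \<le> 1 / (real n)^2" unfolding rho_def by (rule rho_pow_bound[OF n2 t0])
  have c2: "c^2 \<ge> 1" using c by (simp add: one_le_power)
  have pw: "(if balanced_within n a (2*c) l then 0 else 1) \<le> ennreal (F l)" for l
  proof (cases "balanced_within n a (2*c) l")
    case False
    then obtain i where i: "i < n" "real (l i) > a + 2*c \<or> real (l i) < a - 2*c"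
      unfolding balanced_within_def by force
    have "1 \<le> c^2" by (rule c2)
    also have "c^2 \<le> hup c (real (l i) - a) + hdn c (real (l i) - a)"
    proof (cases "real (l i) > a + 2*c")
      case True
      then have "c \<le> max 0 (real (l i) - a - c)" by simp
      then have "c^2 \<le> hup c (real (l i) - a)" unfolding hup_def using c by (intro power_mono) auto
      then show ?thesis using hd0 by (smt (verit))
    next
      case False
      then have "real (l i) < a - 2*c" using i by simp
      then have "c \<le> max 0 (- (real (l i) - a) - c)" by simp
      then have "c^2 \<le> hdn c (real (l i) - a)" unfolding hdn_def using c by (intro power_mono) auto
      then show ?thesis using hu0 by (smt (verit))
    qed
    also have "\<dots> \<le> F l" unfolding F_def
      by (rule member_le_sum[of i "{..<n}"]) (use i hu0 hd0 in \<open>auto intro: add_nonneg_nonneg\<close>)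
    finally show ?thesis using False by simp
  qed simp
  have "(\<integral>\<^sup>+\<omega>. (if balanced_within n a (2*c) (load l' \<omega> t0) then 0 else 1) \<partial>pair_stream_space n)
     \<le> (\<integral>\<^sup>+\<omega>. ennreal (F (load l' \<omega> t0)) \<partial>pair_stream_space n)"
    by (intro nn_integral_mono pw)
  also have "\<dots> \<le> ennreal (rho ^ t0 * F l')" by (rule int)
  also have "\<dots> \<le> ennreal (1 / real n)"
  proof (rule ennreal_leI)
    have "rho ^ t0 * F l' \<le> 1 / (real n)^2 * real n" using rp Fl' F0[of l'] rho0
      by (intro mult_mono) auto
    also have "\<dots> = 1 / real n" using np by (simp add: power2_eq_square)
    finally show "rho ^ t0 * F l' \<le> 1 / real n" .
  qed
  finally show ?thesis .
qed



lemma T1_meas: "T1 n l0 \<in> measurable (pair_stream_space n) (count_space UNIV)"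
  unfolding T1_def by (rule measurable_Least) (rule measurable_load_pred)

lemma pred_T1: "Measurable.pred (pair_stream_space n) (\<lambda>\<omega>. R (T1 n l0 \<omega>))"
  by (rule measurable_compose[OF T1_meas measurable_count_space])

lemma T2_meas: "T2 c n l0 \<in> measurable (pair_stream_space n) (count_space UNIV)"
  unfolding T2_def
proof (rule measurable_Least)
  fix i
  show "Measurable.pred (pair_stream_space n) (\<lambda>x. T1 n l0 x \<le> i \<and> balanced_within n (avg_load n l0) (2 * c) (load l0 x i))"
    by (intro pred_intros_logic pred_T1 measurable_load_pred)
qed

lemma pred_T2T1: "Measurable.pred (pair_stream_space n) (\<lambda>\<omega>. R (T2 c n l0 \<omega>) (T1 n l0 \<omega>))"
  by (rule measurable_compose_countable'[where f="\<lambda>i \<omega>. R i (T1 n l0 \<omega>)" and I=UNIV, OF pred_T1 T2_meas]) simp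

lemma pred_sets_S: "Measurable.pred M P \<Longrightarrow> {\<omega> \<in> space M. P \<omega>} \<in> sets M"
  by measurable

lemma G_meas:
  "{\<omega> \<in> space (pair_stream_space n).
         (\<exists>t. potential n (avg_load n l0) (load l0 \<omega> t) < real n) \<and>
         (\<exists>t \<ge> T1 n l0 \<omega>. balanced_within n (avg_load n l0) (2 * c) (load l0 \<omega> t)) \<and>
         real (T2 c n l0 \<omega>) \<le> real (T1 n l0 \<omega>) + K} \<in> sets (pair_stream_space n)"
proof (rule pred_sets_S)
  have p1: "Measurable.pred (pair_stream_space n) (\<lambda>\<omega>. \<exists>t. potential n (avg_load n l0) (load l0 \<omega> t) < real n)"
    by (rule pred_intros_countable(2), rule measurable_load_pred)
  have p2: "Measurable.pred (pair_stream_space n) (\<lambda>\<omega>. \<exists>t. T1 n l0 \<omega> \<le> t \<and> balanced_within n (avg_load n l0) (2 * c) (load l0 \<omega> t))"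
    by (rule pred_intros_countable(2), rule pred_intros_logic(3)[OF pred_T1 measurable_load_pred])
  have p3: "Measurable.pred (pair_stream_space n) (\<lambda>\<omega>. real (T2 c n l0 \<omega>) \<le> real (T1 n l0 \<omega>) + K)"
    by (rule pred_T2T1)
  show "Measurable.pred (pair_stream_space n) (\<lambda>\<omega>. (\<exists>t. potential n (avg_load n l0) (load l0 \<omega> t) < real n) \<and>
         (\<exists>t \<ge> T1 n l0 \<omega>. balanced_within n (avg_load n l0) (2 * c) (load l0 \<omega> t)) \<and>
         real (T2 c n l0 \<omega>) \<le> real (T1 n l0 \<omega>) + K)"
    by (rule pred_intros_logic(3)[OF p1 pred_intros_logic(3)[OF p2 p3]])
qed

lemma ln2_bound: "ln (2::real) \<ge> 1/4"
proof -
  have h1: "1/2 - (1/2)^2 \<le> ln (1 + 1/2::real)" by (rule ln_one_plus_pos_lower_bound) auto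
  have h2: "ln (1 + 1/2::real) \<le> ln 2" by (subst ln_le_cancel_iff) auto
  have h3: "(1/2::real) - (1/2)^2 = 1/4" by (simp add: power2_eq_square)
  show ?thesis using h1 h2 unfolding h3 by linarith
qed

lemma main_bound:
  fixes c :: real and n :: nat and l0 :: "nat \<Rightarrow> nat"
  assumes c: "c \<ge> 10" and n2: "n \<ge> 2"
  shows "measure (pair_stream_space n)
      {\<omega> \<in> space (pair_stream_space n).
         (\<exists>t. potential n (avg_load n l0) (load l0 \<omega> t) < real n) \<and>
         (\<exists>t \<ge> T1 n l0 \<omega>. balanced_within n (avg_load n l0) (2 * c) (load l0 \<omega> t)) \<and>
         real (T2 c n l0 \<omega>) \<le> real (T1 n l0 \<omega>) + 10 * real n * ln (real n)}
    \<ge> 1 - 10 / real n"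
proof -
  let ?S = "pair_stream_space n"
  interpret prob_space ?S by (rule prob_space_S[OF n2])
  define a where "a = avg_load n l0"
  define Q where "Q l = (potential n a l < real n)" for l
  define bal where "bal l = balanced_within n a (2 * c) l" for l
  define t0 where "t0 = nat \<lceil>8 * real n * ln (real n)\<rceil>"
  have np: "real n > 0" using n2 by simp
  have "ln 2 \<le> ln (real n)" using n2 by (subst ln_le_cancel_iff) auto
  then have lnn: "ln (real n) \<ge> 1/4" using ln2_bound by linarith
  have nln: "real n * ln (real n) \<ge> 1/2"
  proof -
    have "2 * (1/4) \<le> real n * ln (real n)" using n2 lnn by (intro mult_mono) auto
    then show ?thesis by simp
  qed
  have t0l: "real t0 \<ge> 8 * real n * ln (real n)" unfolding t0_def by linarith
  have t0u: "real t0 \<le> 8 * real n * ln (real n) + 1"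
  proof -
    have "8 * real n * ln (real n) \<ge> 0" using nln by simp
    then show ?thesis unfolding t0_def by linarith
  qed
  have t0C: "real t0 \<le> 10 * real n * ln (real n)" using t0u nln by linarith
  define G where "G = {\<omega> \<in> space ?S.
         (\<exists>t. potential n (avg_load n l0) (load l0 \<omega> t) < real n) \<and>
         (\<exists>t \<ge> T1 n l0 \<omega>. balanced_within n (avg_load n l0) (2 * c) (load l0 \<omega> t)) \<and>
         real (T2 c n l0 \<omega>) \<le> real (T1 n l0 \<omega>) + 10 * real n * ln (real n)}"
  have Gs: "G \<in> sets ?S" unfolding G_def by (rule G_meas)
  obtain t1 where t1: "emeasure ?S {\<omega>. \<not> potential n a (load l0 \<omega> t1) < real n} \<le> ennreal (1 / real n)"
    using T1_finite_prob[OF n2 a_def] by blast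
  define E0 where "E0 = {\<omega>. \<not> Q (load l0 \<omega> t1)}"
  define A where "A s = {\<omega>. Q (load l0 \<omega> s) \<and> (\<forall>r<s. \<not> Q (load l0 \<omega> r))}" for s
  define B where "B s = {\<omega>. (Q (load l0 \<omega> s) \<and> (\<forall>r<s. \<not> Q (load l0 \<omega> r))) \<and> \<not> bal (load l0 \<omega> (s + t0))}" for s
  have E0s: "E0 \<in> sets ?S" unfolding E0_def by (intro sets_S measurable_load_pred)
  have pall: "Measurable.pred ?S (\<lambda>\<omega>. \<forall>r<s. \<not> Q (load l0 \<omega> r))" for s
    apply (rule pred_intros_countable(1))
    apply (rule pred_intros_logic(4))
     apply (rule measurable_const; simp)
    apply (rule pred_intros_logic(2))
    apply (rule measurable_load_pred)
    done
  have As: "A s \<in> sets ?S" for s unfolding A_def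
    by (rule sets_S, rule pred_intros_logic(3)[OF measurable_load_pred pall])
  have Bs: "B s \<in> sets ?S" for s unfolding B_def
    by (rule sets_S, rule pred_intros_logic(3)[OF pred_intros_logic(3)[OF measurable_load_pred pall] pred_intros_logic(2)[OF measurable_load_pred]])
  have hyp: "(\<integral>\<^sup>+\<omega>. (if bal (load l' \<omega> t0) then 0 else 1) \<partial>?S) \<le> ennreal (1 / real n)" if "Q l'" for l'
    using bal_prob[OF n2 _ t0l, of c a l'] that c unfolding Q_def bal_def by simp
  have Bb: "emeasure ?S (B s) \<le> ennreal (1 / real n) * emeasure ?S (A s)" for s
  proof -
    have "emeasure ?S (B s) = (\<integral>\<^sup>+\<omega>. (if Q (load l0 \<omega> s) \<and> (\<forall>r<s. \<not> Q (load l0 \<omega> r)) then (if bal (load l0 \<omega> (s + t0)) then 0 else 1) else 0) \<partial>?S)"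
      by (subst nn_integral_indicator[OF Bs, symmetric]) (auto intro!: nn_integral_cong simp: B_def indicator_def)
    also have "\<dots> \<le> ennreal (1 / real n) * (\<integral>\<^sup>+\<omega>. (if Q (load l0 \<omega> s) \<and> (\<forall>r<s. \<not> Q (load l0 \<omega> r)) then 1 else 0) \<partial>?S)"
      by (rule markov_s[OF n2, where g="\<lambda>l. if bal l then 0 else 1"]) (rule hyp)
    also have "(\<integral>\<^sup>+\<omega>. (if Q (load l0 \<omega> s) \<and> (\<forall>r<s. \<not> Q (load l0 \<omega> r)) then 1 else 0) \<partial>?S) = emeasure ?S (A s)"
      by (subst nn_integral_indicator[OF As, symmetric]) (auto intro!: nn_integral_cong simp: A_def indicator_def)
    finally show ?thesis .
  qed
  have disj: "disjoint_family A"
    unfolding disjoint_family_on_def A_def by (auto, metis linorder_neqE_nat)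
  have "emeasure ?S (\<Union>s. B s) \<le> (\<Sum>s. emeasure ?S (B s))"
    by (rule emeasure_subadditive_countably) (use Bs in auto)
  also have "\<dots> \<le> (\<Sum>s. ennreal (1 / real n) * emeasure ?S (A s))"
    by (intro suminf_le Bb) auto
  also have "\<dots> = ennreal (1 / real n) * (\<Sum>s. emeasure ?S (A s))"
    by (rule ennreal_suminf_cmult)
  also have "(\<Sum>s. emeasure ?S (A s)) = emeasure ?S (\<Union>s. A s)"
    by (rule suminf_emeasure) (use As disj in auto)
  finally have UB1: "emeasure ?S (\<Union>s. B s) \<le> ennreal (1 / real n) * emeasure ?S (\<Union>s. A s)" .
  also have "\<dots> \<le> ennreal (1 / real n) * 1" by (intro mult_left_mono emeasure_le_1) simp
  finally have UBe: "emeasure ?S (\<Union>s. B s) \<le> ennreal (1 / real n)" by simp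
  have UBs: "(\<Union>s. B s) \<in> sets ?S" using Bs by auto
  have mE0: "measure ?S E0 \<le> 1 / real n"
    using t1 unfolding E0_def Q_def by (simp add: emeasure_eq_measure ennreal_le_iff)
  have mUB: "measure ?S (\<Union>s. B s) \<le> 1 / real n"
    using UBe by (simp add: emeasure_eq_measure ennreal_le_iff)
  have sub: "space ?S - (E0 \<union> (\<Union>s. B s)) \<subseteq> G"
  proof
    fix \<omega> assume \<omega>: "\<omega> \<in> space ?S - (E0 \<union> (\<Union>s. B s))"
    then have ex: "\<exists>t. Q (load l0 \<omega> t)" unfolding E0_def by auto
    define s where "s = T1 n l0 \<omega>"
    have s_def': "s = (LEAST t. Q (load l0 \<omega> t))" unfolding s_def T1_def Q_def a_def ..
    have Qs: "Q (load l0 \<omega> s)" unfolding s_def' by (rule LeastI_ex[OF ex])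
    have nQ: "\<forall>r<s. \<not> Q (load l0 \<omega> r)" unfolding s_def' using not_less_Least by blast
    have "\<omega> \<notin> B s" using \<omega> by auto
    then have balt: "bal (load l0 \<omega> (s + t0))" using Qs nQ unfolding B_def by auto
    have le1: "T1 n l0 \<omega> \<le> s + t0" unfolding s_def by simp
    have balt': "balanced_within n (avg_load n l0) (2 * c) (load l0 \<omega> (s + t0))"
      using balt unfolding bal_def a_def .
    have T2le: "T2 c n l0 \<omega> \<le> s + t0"
      unfolding T2_def by (rule Least_le) (use le1 balt' in blast)
    show "\<omega> \<in> G" unfolding G_def
    proof (intro CollectI conjI)
      show "\<omega> \<in> space ?S" by simp
      show "\<exists>t. potential n (avg_load n l0) (load l0 \<omega> t) < real n" using ex unfolding Q_def a_def .
      show "\<exists>t \<ge> T1 n l0 \<omega>. balanced_within n (avg_load n l0) (2 * c) (load l0 \<omega> t)"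
        using le1 balt' by blast
      have "real (T2 c n l0 \<omega>) \<le> real s + real t0" using T2le by linarith
      then show "real (T2 c n l0 \<omega>) \<le> real (T1 n l0 \<omega>) + 10 * real n * ln (real n)"
        unfolding s_def using t0C by linarith
    qed
  qed
  have "1 - 10 / real n \<le> 1 - (1 / real n + 1 / real n)"
    using np by (simp add: field_simps)
  also have "\<dots> \<le> 1 - measure ?S (E0 \<union> (\<Union>s. B s))"
    using measure_Un_le[OF E0s UBs] mE0 mUB by linarith
  also have "\<dots> = measure ?S (space ?S - (E0 \<union> (\<Union>s. B s)))"
    using prob_compl[of "E0 \<union> (\<Union>s. B s)"] E0s UBs by simp
  also have "\<dots> \<le> measure ?S G" by (rule finite_measure_mono[OF sub Gs])
  finally show ?thesis unfolding G_def .
qed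


theorem lemma4:
  fixes c :: real
  assumes "c \<ge> 10"
  shows "\<exists>C > 0. \<forall>n \<ge> 2. \<forall>l0 :: nat \<Rightarrow> nat.
    measure (pair_stream_space n)
      {\<omega> \<in> space (pair_stream_space n).
         (\<exists>t. potential n (avg_load n l0) (load l0 \<omega> t) < real n) \<and>
         (\<exists>t \<ge> T1 n l0 \<omega>. balanced_within n (avg_load n l0) (2 * c) (load l0 \<omega> t)) \<and>
         real (T2 c n l0 \<omega>) \<le> real (T1 n l0 \<omega>) + C * real n * ln (real n)}
    \<ge> 1 - C / real n"
proof (intro exI[of _ "10::real"] conjI allI impI)
  show "(0::real) < 10" by simp
  fix n :: nat and l0 :: "nat \<Rightarrow> nat" assume "n \<ge> 2"
  then show "measure (pair_stream_space n)
      {\<omega> \<in> space (pair_stream_space n).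
         (\<exists>t. potential n (avg_load n l0) (load l0 \<omega> t) < real n) \<and>
         (\<exists>t \<ge> T1 n l0 \<omega>. balanced_within n (avg_load n l0) (2 * c) (load l0 \<omega> t)) \<and>
         real (T2 c n l0 \<omega>) \<le> real (T1 n l0 \<omega>) + 10 * real n * ln (real n)}
    \<ge> 1 - 10 / real n" by (rule main_bound[OF assms])
qed

end
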